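(* Let $w\ge0$ be integrable on $\mathbb{T}$ and let $I\subset\mathbb{T}$ be an arc with $\int_I\log w\,dm>-\infty$. Let $p>0$ and let $\{f_n\}_{n\ge1}$ be positive functions on $\mathbb{T}$ with $\int_I f_n^p\,w\,dm<C$ for all $n$, for some constant $C>0$. Then the sequence of measures $\{\log^+f_n\,dm\}_{n\ge1}$ is uniformly absolutely continuous on $I$.
   Context: $m$ is normalized arc-length measure on the unit circle $\mathbb{T}$; $\log^+x=\max(0,\log x)$. A sequence of non-negative measures $\{g_n\,dm\}$ is uniformly absolutely continuous on $I$ if for every $\epsilon>0$ there is $\delta>0$, independent of $n$, such that every Borel set $A\subset I$ with $m(A)<\delta$ satisfies $\int_A g_n\,dm<\epsilon$ for all $n$. *)

theory Defs
  imports "HOL-Analysis.Analysis"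
begin

text \<open>Normalized arc-length measure m on the unit circle T = sphere 0 1, realised as
  the push-forward of Lebesgue measure on [0,1) under t \<mapsto> exp(2 pi i t).\<close>
definition circle_measure :: "complex measure" where
  "circle_measure = distr (restrict_space lborel {0..<1}) (restrict_space borel (sphere 0 1))
                          (\<lambda>t. cis (2 * pi * t))"

definition is_arc :: "complex set \<Rightarrow> bool" where
  "is_arc I \<longleftrightarrow> (\<exists>a b. a < b \<and> b \<le> a + 1 \<and> I = (\<lambda>t. cis (2 * pi * t)) ` {a..b})"

definition log_plus :: "real \<Rightarrow> real" where
  "log_plus x = max 0 (ln x)"

end

theory Submission imports Defs begin

lemma sup_min_nat: "(SUP N::nat. min (x::ennreal) (of_nat N)) = x"
proof (rule antisym)
  show "(SUP N::nat. min x (of_nat N)) \<le> x" by (rule SUP_least) simp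
  show "x \<le> (SUP N::nat. min x (of_nat N))"
  proof (rule le_SUP_iff[THEN iffD2], intro allI impI)
    fix y assume y: "y < x"
    then have "y < top" using top_greatest less_le_trans by blast
    then obtain N where "y < of_nat N" using ennreal_Ex_less_of_nat by blast
    then show "\<exists>i\<in>UNIV. y < min x (of_nat i)" using y by auto
  qed
qed

lemma abs_cont:
  fixes g :: "'a \<Rightarrow> ennreal"
  assumes fm: "finite_measure M" and g[measurable]: "g \<in> borel_measurable M"
    and fin: "integral\<^sup>N M g < \<infinity>" and e: "e > 0"
  shows "\<exists>d>0. \<forall>A\<in>sets M. measure M A < d \<longrightarrow> (\<integral>\<^sup>+x. g x * indicator A x \<partial>M) \<le> ennreal e"
proof -
  define gN where "gN = (\<lambda>(N::nat) x. min (g x) (of_nat N))"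
  have gNm[measurable]: "gN N \<in> borel_measurable M" for N unfolding gN_def by measurable
  have inc: "incseq gN" unfolding gN_def by (auto simp: incseq_def le_fun_def intro!: min.coboundedI2)
  have sup: "(SUP N. integral\<^sup>N M (gN N)) = integral\<^sup>N M g"
    using nn_integral_monotone_convergence_SUP[OF inc gNm] sup_min_nat unfolding gN_def by simp
  have gNle: "integral\<^sup>N M (gN N) \<le> integral\<^sup>N M g" for N
    unfolding gN_def by (intro nn_integral_mono) simp
  obtain G where G: "integral\<^sup>N M g = ennreal G" "G \<ge> 0" using fin
    by (cases "integral\<^sup>N M g") auto
  have "\<exists>N. integral\<^sup>N M g \<le> integral\<^sup>N M (gN N) + ennreal (e/2)"
  proof (cases "G \<le> e/2")
    case True
    then show ?thesis using G by (intro exI[of _ 0]) (auto intro: add_increasing)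
  next
    case False
    then have "ennreal (G - e/2) < (SUP N. integral\<^sup>N M (gN N))"
      using sup G e by (simp add: ennreal_less_iff)
    then obtain N where N: "ennreal (G - e/2) < integral\<^sup>N M (gN N)"
      by (auto simp: less_SUP_iff)
    have "integral\<^sup>N M g = ennreal (G - e/2) + ennreal (e/2)"
      using G False e by (simp flip: ennreal_plus)
    also have "\<dots> \<le> integral\<^sup>N M (gN N) + ennreal (e/2)" using N by (intro add_right_mono) simp
    finally show ?thesis by blast
  qed
  then obtain N where N: "integral\<^sup>N M g \<le> integral\<^sup>N M (gN N) + ennreal (e/2)" by blast
  have fin2: "integral\<^sup>N M (gN N) \<noteq> \<infinity>" using le_less_trans[OF gNle[of N] fin] by (metis less_irrefl)
  have diffle: "(\<integral>\<^sup>+x. g x - gN N x \<partial>M) \<le> ennreal (e/2)"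
  proof -
    have "(\<integral>\<^sup>+x. g x - gN N x \<partial>M) = integral\<^sup>N M g - integral\<^sup>N M (gN N)"
      using fin2 by (intro nn_integral_diff) (auto simp: gN_def)
    also have "\<dots> \<le> ennreal (e/2)" using N fin2 by (simp add: ennreal_minus_le_iff)
    finally show ?thesis .
  qed
  define d where "d = e / (2 * (real N + 1))"
  have d: "d > 0" using e unfolding d_def by simp
  show ?thesis
  proof (intro exI[of _ d] conjI d ballI impI)
    fix A assume A[measurable]: "A \<in> sets M" and mA: "measure M A < d"
    have pw: "g x * indicator A x \<le> of_nat N * indicator A x + (g x - gN N x)" for x
    proof (cases "x \<in> A")
      case True
      have "g x = gN N x + (g x - gN N x)" unfolding gN_def by (simp add: add_diff_inverse_ennreal)
      also have "\<dots> \<le> of_nat N + (g x - gN N x)" unfolding gN_def by (intro add_right_mono) simp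
      finally show ?thesis using True by simp
    qed simp
    have "(\<integral>\<^sup>+x. g x * indicator A x \<partial>M) \<le> (\<integral>\<^sup>+x. of_nat N * indicator A x + (g x - gN N x) \<partial>M)"
      by (intro nn_integral_mono pw)
    also have "\<dots> = of_nat N * emeasure M A + (\<integral>\<^sup>+x. g x - gN N x \<partial>M)"
      by (subst nn_integral_add) (auto simp: nn_integral_cmult_indicator)
    also have "of_nat N * emeasure M A = ennreal (real N * measure M A)"
      using finite_measure.emeasure_eq_measure[OF fm] by (simp add: ennreal_mult ennreal_of_nat_eq_real_of_nat)
    also have "real N * measure M A \<le> e/2"
    proof -
      have "real N * measure M A \<le> real N * d" using mA by (intro mult_left_mono) auto
      also have "\<dots> \<le> (real N + 1) * d" using d by (intro mult_right_mono) auto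
      also have "\<dots> = e/2" unfolding d_def by (simp add: field_simps)
      finally show ?thesis .
    qed
    hence "ennreal (real N * measure M A) \<le> ennreal (e/2)" by (rule ennreal_leI)
    hence "ennreal (real N * measure M A) + (\<integral>\<^sup>+x. g x - gN N x \<partial>M) \<le> ennreal (e/2) + ennreal (e/2)"
      using diffle by (rule add_mono)
    also have "\<dots> = ennreal e" using e by (simp flip: ennreal_plus)
    finally show "(\<integral>\<^sup>+x. g x * indicator A x \<partial>M) \<le> ennreal e" .
  qed
qed


lemma key_real:
  fixes x w t p :: real
  assumes x: "x > 0" and w: "w > 0" and t: "t \<ge> 1" and p: "p > 0"
  shows "log_plus x \<le> (1/(p*t)) * (x powr p * w) + ln t / p + (1/p) * max 0 (- ln w)"
proof -
  let ?y = "x powr p * w"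
  have y: "?y > 0" using x w by simp
  have lny: "ln ?y = p * ln x + ln w" using x w by (simp add: ln_mult)
  have "ln (?y / t) \<le> ?y / t - 1" using y t by (intro ln_le_minus_one) simp
  hence "ln ?y - ln t \<le> ?y / t" using y t x w by (simp add: ln_div)
  hence "p * ln x \<le> ?y / t + ln t + max 0 (- ln w)" using lny by linarith
  hence "ln x \<le> (?y / t + ln t + max 0 (- ln w)) / p" using p by (simp add: field_simps)
  also have "\<dots> = (1/(p*t)) * ?y + ln t / p + (1/p) * max 0 (- ln w)"
    using p t by (simp add: field_simps)
  finally have a: "ln x \<le> \<dots>" .
  have b: "0 \<le> (1/(p*t)) * ?y + ln t / p + (1/p) * max 0 (- ln w)"
    using p t y by (intro add_nonneg_nonneg) auto
  show ?thesis unfolding log_plus_def using a b by simp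
qed

lemma key_ennreal:
  fixes x w t p :: real
  assumes x: "x > 0" and w: "w > 0" and t: "t \<ge> 1" and p: "p > 0"
  shows "ennreal (log_plus x) \<le> ennreal (1/(p*t)) * ennreal (x powr p * w) + ennreal (ln t / p)
           + ennreal (1/p) * ennreal (- ln w)"
proof -
  have "ennreal (log_plus x) \<le> ennreal ((1/(p*t)) * (x powr p * w) + ln t / p + (1/p) * max 0 (- ln w))"
    using key_real[OF assms] by (rule ennreal_leI)
  also have "\<dots> = ennreal ((1/(p*t)) * (x powr p * w)) + ennreal (ln t / p) + ennreal ((1/p) * max 0 (- ln w))"
    using x w t p by (subst ennreal_plus; simp)+
  also have "\<dots> = ennreal (1/(p*t)) * ennreal (x powr p * w) + ennreal (ln t / p)
           + ennreal (1/p) * ennreal (- ln w)"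
  proof -
    have e1: "ennreal ((1/(p*t)) * (x powr p * w)) = ennreal (1/(p*t)) * ennreal (x powr p * w)"
      using x w t p by (intro ennreal_mult) auto
    have e3: "ennreal ((1/p) * max 0 (- ln w)) = ennreal (1/p) * ennreal (- ln w)"
      using p by (subst ennreal_mult) (auto simp: ennreal_max_0)
    show ?thesis by (simp only: e1 e3)
  qed
  finally show ?thesis .
qed

lemma circ_meas: "(\<lambda>t. cis (2 * pi * t)) \<in> restrict_space lborel {0..<1} \<rightarrow>\<^sub>M restrict_space borel (sphere (0::complex) 1)"
proof (rule measurable_restrict_space3)
  show "(\<lambda>t. cis (2 * pi * t)) \<in> lborel \<rightarrow>\<^sub>M borel"
  proof -
    have "continuous_on UNIV (\<lambda>t::real. cis (2 * pi * t))" by (intro continuous_intros)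
    then show ?thesis using borel_measurable_continuous_onI by simp
  qed
  show "(\<lambda>t. cis (2 * pi * t)) \<in> {0..<1} \<rightarrow> sphere 0 1" by auto
qed

lemma circ_space: "space circle_measure = sphere 0 1"
  unfolding circle_measure_def by simp

lemma circ_sets: "sets circle_measure = sets (restrict_space borel (sphere (0::complex) 1))"
  unfolding circle_measure_def by simp

lemma circ_finite: "finite_measure circle_measure"
proof
  have sp: "sphere 0 1 \<in> sets (restrict_space borel (sphere (0::complex) 1))"
    by (subst sets_restrict_space_iff) auto
  have "emeasure circle_measure (space circle_measure)
      = emeasure (restrict_space lborel {0..<1}) ((\<lambda>t. cis (2 * pi * t)) -` sphere 0 1 \<inter> space (restrict_space lborel {0..<1}))"
    unfolding circle_measure_def by (subst emeasure_distr[OF circ_meas]) (auto simp: sp)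
  also have "\<dots> \<le> emeasure (restrict_space lborel {0..<1::real}) (space (restrict_space lborel {0..<1::real}))"
    by (rule emeasure_mono) (auto simp: sets_restrict_space_iff)
  also have "\<dots> = emeasure lborel {0..<1::real}"
    by (subst emeasure_restrict_space) auto
  also have "\<dots> = 1" by simp
  finally show "emeasure circle_measure (space circle_measure) \<noteq> \<infinity>"
    by (auto simp: top_unique)
qed

lemma arc_sets: assumes "is_arc I" shows "I \<in> sets circle_measure"
proof -
  obtain a b where I: "I = (\<lambda>t. cis (2 * pi * t)) ` {a..b}" using assms unfolding is_arc_def by blast
  have "compact I" unfolding I by (intro compact_continuous_image continuous_intros) auto
  hence "closed I" by (rule compact_imp_closed)
  have "I \<subseteq> sphere 0 1" unfolding I by auto
  moreover have "sphere (0::complex) 1 \<inter> space borel \<in> sets borel" by simp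
  ultimately show ?thesis unfolding circ_sets using \<open>closed I\<close>
    by (subst sets_restrict_space_iff) auto
qed


theorem mainTheorem10:
  fixes w :: "complex \<Rightarrow> real" and I :: "complex set" and p C :: real
    and f :: "nat \<Rightarrow> complex \<Rightarrow> real"
  assumes w_int: "integrable circle_measure w"
    and w_nonneg: "\<forall>z\<in>space circle_measure. w z \<ge> 0"
    and arc: "is_arc I"
    and logw_pos: "AE z in circle_measure. z \<in> I \<longrightarrow> w z > 0"
    and logw_int: "(\<integral>\<^sup>+ z\<in>I. ennreal (- ln (w z)) \<partial>circle_measure) < \<infinity>"
    and p_pos: "p > 0"
    and C_pos: "C > 0"
    and f_meas: "\<And>n. f n \<in> borel_measurable circle_measure"
    and f_pos: "\<And>n. \<forall>z\<in>space circle_measure. f n z > 0"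
    and f_bound: "\<And>n. (\<integral>\<^sup>+ z\<in>I. ennreal (f n z powr p * w z) \<partial>circle_measure) < ennreal C"
  shows "\<forall>\<epsilon>>0. \<exists>\<delta>>0. \<forall>n. \<forall>A\<in>sets circle_measure. A \<subseteq> I \<longrightarrow>
           measure circle_measure A < \<delta> \<longrightarrow>
           (\<integral>\<^sup>+ z\<in>A. ennreal (log_plus (f n z)) \<partial>circle_measure) < ennreal \<epsilon>"
proof (intro allI impI)
  fix \<epsilon> :: real assume eps: "\<epsilon> > 0"
  let ?M = circle_measure
  have fm: "finite_measure ?M" by (rule circ_finite)
  have wm[measurable]: "w \<in> borel_measurable ?M" using w_int by (rule borel_measurable_integrable)
  have Im[measurable]: "I \<in> sets ?M" using arc by (rule arc_sets)
  note f_meas[measurable]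
  define g where "g = (\<lambda>z. ennreal (- ln (w z)) * indicator I z)"
  have gm: "g \<in> borel_measurable ?M" unfolding g_def by measurable
  have gfin: "integral\<^sup>N ?M g < \<infinity>" using logw_int unfolding g_def by simp
  have pe: "p * \<epsilon> / 4 > 0" using p_pos eps by simp
  obtain d1 where d1: "d1 > 0" and d1A: "\<And>A. A \<in> sets ?M \<Longrightarrow> measure ?M A < d1 \<Longrightarrow>
      (\<integral>\<^sup>+x. g x * indicator A x \<partial>?M) \<le> ennreal (p * \<epsilon> / 4)"
    using abs_cont[OF fm gm gfin pe] by blast
  define t where "t = max 1 (4 * C / (p * \<epsilon>))"
  have t1: "t \<ge> 1" unfolding t_def by simp
  define T where "T = ln t"
  have T0: "T \<ge> 0" unfolding T_def using t1 by simp
  define d2 where "d2 = p * \<epsilon> / (4 * (T + 1))"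
  have d2: "d2 > 0" unfolding d2_def using pe T0 by simp
  show "\<exists>\<delta>>0. \<forall>n. \<forall>A\<in>sets ?M. A \<subseteq> I \<longrightarrow> measure ?M A < \<delta> \<longrightarrow>
           (\<integral>\<^sup>+ z\<in>A. ennreal (log_plus (f n z)) \<partial>?M) < ennreal \<epsilon>"
  proof (intro exI[of _ "min d1 d2"] conjI allI ballI impI)
    show "min d1 d2 > 0" using d1 d2 by simp
    fix n A assume A[measurable]: "A \<in> sets ?M" and AI: "A \<subseteq> I" and mA: "measure ?M A < min d1 d2"
    have pw: "AE z in ?M. ennreal (log_plus (f n z)) * indicator A z \<le>
        ennreal (1/(p*t)) * (ennreal (f n z powr p * w z) * indicator I z) + ennreal (T / p) * indicator A z
        + ennreal (1/p) * (ennreal (- ln (w z)) * indicator A z)"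
      using logw_pos AE_space
    proof eventually_elim
      case (elim z)
      show ?case
      proof (cases "z \<in> A")
        case True
        then have "z \<in> I" using AI by auto
        then have "w z > 0" "f n z > 0" using elim f_pos by auto
        then show ?thesis using True \<open>z \<in> I\<close> key_ennreal[OF \<open>f n z > 0\<close> \<open>w z > 0\<close> t1 p_pos]
          unfolding T_def by simp
      qed simp
    qed
    have "(\<integral>\<^sup>+ z\<in>A. ennreal (log_plus (f n z)) \<partial>?M) \<le>
        (\<integral>\<^sup>+ z. ennreal (1/(p*t)) * (ennreal (f n z powr p * w z) * indicator I z) + ennreal (T / p) * indicator A z
        + ennreal (1/p) * (ennreal (- ln (w z)) * indicator A z) \<partial>?M)"
      by (rule nn_integral_mono_AE[OF pw])
    also have "\<dots> = ennreal (1/(p*t)) * (\<integral>\<^sup>+ z\<in>I. ennreal (f n z powr p * w z) \<partial>?M)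
        + ennreal (T / p) * emeasure ?M A + ennreal (1/p) * (\<integral>\<^sup>+ z. g z * indicator A z \<partial>?M)"
    proof -
      have gA: "(\<lambda>z. g z * indicator A z) = (\<lambda>z. ennreal (- ln (w z)) * indicator A z)"
        using AI unfolding g_def by (auto simp: indicator_def fun_eq_iff)
      show ?thesis unfolding gA
        by (subst nn_integral_add; (subst nn_integral_add)?; (subst nn_integral_cmult)?;
            simp add: nn_integral_cmult nn_integral_cmult_indicator)
    qed
    also have "\<dots> \<le> ennreal (\<epsilon>/4) + ennreal (\<epsilon>/4) + ennreal (\<epsilon>/4)"
    proof (intro add_mono)
      have "ennreal (1/(p*t)) * (\<integral>\<^sup>+ z\<in>I. ennreal (f n z powr p * w z) \<partial>?M) \<le> ennreal (1/(p*t)) * ennreal C"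
        using f_bound[of n] by (intro mult_left_mono) auto
      also have "\<dots> = ennreal (C / (p * t))" using p_pos t1 C_pos by (subst ennreal_mult[symmetric]) auto
      also have "C / (p * t) \<le> \<epsilon> / 4"
      proof -
        have "4 * C / (p * \<epsilon>) \<le> t" unfolding t_def by simp
        hence "4 * C \<le> t * (p * \<epsilon>)" using pe by (simp add: field_simps)
        thus ?thesis using p_pos t1 by (simp add: field_simps)
      qed
      finally show "ennreal (1/(p*t)) * (\<integral>\<^sup>+ z\<in>I. ennreal (f n z powr p * w z) \<partial>?M) \<le> ennreal (\<epsilon>/4)"
        by (simp add: ennreal_leI order_trans)
    next
      have "ennreal (T / p) * emeasure ?M A = ennreal (T / p * measure ?M A)"
        using finite_measure.emeasure_eq_measure[OF fm] T0 p_pos by (simp add: ennreal_mult[symmetric])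
      also have "T / p * measure ?M A \<le> \<epsilon> / 4"
      proof -
        have "T / p * measure ?M A \<le> T / p * d2" using mA T0 p_pos by (intro mult_left_mono) auto
        also have "\<dots> = T / (T + 1) * (\<epsilon> / 4)" unfolding d2_def using p_pos T0 by (simp add: field_simps)
        also have "\<dots> \<le> 1 * (\<epsilon> / 4)" using T0 eps by (intro mult_right_mono) auto
        finally show ?thesis by simp
      qed
      finally show "ennreal (T / p) * emeasure ?M A \<le> ennreal (\<epsilon>/4)" by (simp add: ennreal_leI)
    next
      have "ennreal (1/p) * (\<integral>\<^sup>+ z. g z * indicator A z \<partial>?M) \<le> ennreal (1/p) * ennreal (p * \<epsilon> / 4)"
        using d1A[OF A] mA by (intro mult_left_mono) auto
      also have "\<dots> = ennreal (\<epsilon>/4)" using p_pos eps by (subst ennreal_mult[symmetric]) auto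
      finally show "ennreal (1/p) * (\<integral>\<^sup>+ z. g z * indicator A z \<partial>?M) \<le> ennreal (\<epsilon>/4)" .
    qed
    also have "\<dots> = ennreal (3 * \<epsilon> / 4)" using eps by (simp flip: ennreal_plus)
    also have "\<dots> < ennreal \<epsilon>" using eps by (simp add: ennreal_less_iff)
    finally show "(\<integral>\<^sup>+ z\<in>A. ennreal (log_plus (f n z)) \<partial>?M) < ennreal \<epsilon>" .
  qed
qed

end
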